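(* Let $\mathcal{X}$ be a real Banach space and $g:[a,b]\to\mathcal{X}^*$. Assume that $g$ is Denjoy–Gel'fand integrable on $[a,t]$ for every $t\in[a,b)$ and that for each $y\in\mathcal{X}$ the limit $\lim_{t\to b^-}\mathcal{D}\int_a^t yg$ exists. Then $g$ is Denjoy–Gel'fand integrable on $[a,b]$ and $$\Big\langle y,\ \mathcal{DG}\int_a^b g\Big\rangle=\lim_{t\to b^-}\Big\langle y,\ \mathcal{DG}\int_a^t g\Big\rangle\quad\text{for each } y\in\mathcal{X}.$$
   Context: For $y\in\mathcal{X}$, $yg$ denotes the real function $t\mapsto g(t)(y)$. A function $F:[a,b]\to\mathbb{R}$ is AC on a set $E$ if for every $\epsilon>0$ there is $\eta>0$ such that for every finite family of nonoverlapping intervals $[c_i,d_i]$ with endpoints in $E$ and $\sum(d_i-c_i)<\eta$ one has $\sum|F(d_i)-F(c_i)|<\epsilon$; $F$ is ACG on $[a,b]$ if $F$ is continuous on $[a,b]$ and $[a,b]$ is a countable union of sets on each of which $F$ is AC. A function $h:[a,b]\to\mathbb{R}$ is Denjoy integrable on $[a,b]$ if there is an ACG function $F$ on $[a,b]$ whose approximate derivative equals $h$ a.e.; then $\mathcal{D}\int_a^b h=F(b)-F(a)$ (and similarly on subintervals). A function $g:[a,b]\to\mathcal{X}^*$ is Denjoy–Gel'fand integrable on $[a,b]$ if $yg$ is Denjoy integrable on $[a,b]$ for each $y\in\mathcal{X}$ and for every interval $I\subset[a,b]$ there is $y_I^*\in\mathcal{X}^*$ with $y_I^*(y)=\mathcal{D}\int_I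 yg$ for all $y\in\mathcal{X}$; one writes $\mathcal{DG}\int_I g=y_I^*$. *)

theory Defs
  imports "HOL-Analysis.Analysis"
begin

definition AC_on_set :: "(real \<Rightarrow> real) \<Rightarrow> real set \<Rightarrow> bool" where
  "AC_on_set F E \<longleftrightarrow>
     (\<forall>\<epsilon>>0. \<exists>\<eta>>0. \<forall>(n::nat) (c::nat \<Rightarrow> real) (d::nat \<Rightarrow> real).
        (\<forall>i<n. c i \<in> E \<and> d i \<in> E \<and> c i \<le> d i) \<and>
        (\<forall>i<n. \<forall>j<n. i \<noteq> j \<longrightarrow> d i \<le> c j \<or> d j \<le> c i) \<and>
        (\<Sum>i<n. d i - c i) < \<eta>
        \<longrightarrow> (\<Sum>i<n. \<bar>F (d i) - F (c i)\<bar>) < \<epsilon>)"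

definition ACG_on :: "(real \<Rightarrow> real) \<Rightarrow> real \<Rightarrow> real \<Rightarrow> bool" where
  "ACG_on F a b \<longleftrightarrow> continuous_on {a..b} F \<and>
     (\<exists>E :: nat \<Rightarrow> real set. (\<Union>n. E n) = {a..b} \<and> (\<forall>n. AC_on_set F (E n)))"

definition approx_deriv :: "(real \<Rightarrow> real) \<Rightarrow> real \<Rightarrow> real \<Rightarrow> real \<Rightarrow> real \<Rightarrow> bool" where
  "approx_deriv F a b x L \<longleftrightarrow>
     (\<forall>\<epsilon>>0. ((\<lambda>r. measure lebesgue
          {y \<in> {a..b}. y \<noteq> x \<and> \<bar>y - x\<bar> \<le> r \<and> \<bar>(F y - F x) / (y - x) - L\<bar> \<ge> \<epsilon>} / r)
        \<longlongrightarrow> 0) (at_right 0))"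

definition denjoy_primitive :: "(real \<Rightarrow> real) \<Rightarrow> (real \<Rightarrow> real) \<Rightarrow> real \<Rightarrow> real \<Rightarrow> bool" where
  "denjoy_primitive F h a b \<longleftrightarrow> ACG_on F a b \<and>
     (AE x in lebesgue. x \<in> {a..b} \<longrightarrow> approx_deriv F a b x (h x))"

definition denjoy_integrable :: "(real \<Rightarrow> real) \<Rightarrow> real \<Rightarrow> real \<Rightarrow> bool" where
  "denjoy_integrable h a b \<longleftrightarrow> (\<exists>F. denjoy_primitive F h a b)"

definition denjoy_integral :: "(real \<Rightarrow> real) \<Rightarrow> real \<Rightarrow> real \<Rightarrow> real" where
  "denjoy_integral h a b = (SOME I. \<exists>F. denjoy_primitive F h a b \<and> I = F b - F a)"

definition DG_integrable :: "(real \<Rightarrow> ('a::banach \<Rightarrow>\<^sub>L real)) \<Rightarrow> real \<Rightarrow> real \<Rightarrow> bool" where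
  "DG_integrable g a b \<longleftrightarrow>
     (\<forall>y. denjoy_integrable (\<lambda>t. g t y) a b) \<and>
     (\<forall>c d. a \<le> c \<and> c \<le> d \<and> d \<le> b \<longrightarrow>
        (\<exists>ys :: 'a \<Rightarrow>\<^sub>L real. \<forall>y. blinfun_apply ys y = denjoy_integral (\<lambda>t. g t y) c d))"

definition DG_integral :: "(real \<Rightarrow> ('a::banach \<Rightarrow>\<^sub>L real)) \<Rightarrow> real \<Rightarrow> real \<Rightarrow> ('a \<Rightarrow>\<^sub>L real)" where
  "DG_integral g c d = (THE ys :: 'a \<Rightarrow>\<^sub>L real. \<forall>y. blinfun_apply ys y = denjoy_integral (\<lambda>t. g t y) c d)"

end

theory Submission
  imports Defs
begin
definition badset :: "(real \<Rightarrow> real) \<Rightarrow> real \<Rightarrow> real \<Rightarrow> real \<Rightarrow> real \<Rightarrow> real \<Rightarrow> real \<Rightarrow> real set" where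
  "badset F a b x L e r = {y \<in> {a..b}. y \<noteq> x \<and> \<bar>y - x\<bar> \<le> r \<and> \<bar>(F y - F x) / (y - x) - L\<bar> \<ge> e}"

lemma approx_deriv_badset:
  "approx_deriv F a b x L \<longleftrightarrow> (\<forall>e>0. ((\<lambda>r. measure lebesgue (badset F a b x L e r) / r) \<longlongrightarrow> 0) (at_right 0))"
  unfolding approx_deriv_def badset_def by (rule refl)

lemma closed_lebesgue: "closed C \<Longrightarrow> C \<in> sets lebesgue"
  by (metis borel_closed sets_completionI_sets sets_lborel)

lemma badset_lmeasurable:
  assumes "continuous_on {a..b} F"
  shows "badset F a b x L e r \<in> lmeasurable"
proof -
  let ?S = "{a..b} - {x}"
  let ?f = "\<lambda>y. \<bar>(F y - F x) / (y - x) - L\<bar>"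
  have c: "continuous_on ?S ?f"
    by (intro continuous_intros continuous_on_subset[OF assms]) auto
  have "closedin (top_of_set ?S) (?S \<inter> ?f -` {e..})"
    by (rule continuous_closedin_preimage[OF c]) (rule closed_atLeast)
  moreover have S: "?S \<in> sets lebesgue"
    by (intro sets.Diff closed_lebesgue closed_atLeastAtMost closed_singleton)
  ultimately have m: "?S \<inter> ?f -` {e..} \<in> sets lebesgue"
    by (rule lebesgue_closedin)
  have eq: "badset F a b x L e r = (?S \<inter> ?f -` {e..}) \<inter> cball x r"
    unfolding badset_def by (auto simp: dist_real_def abs_minus_commute)
  have "(?S \<inter> ?f -` {e..}) \<inter> cball x r \<in> sets lebesgue"
    by (intro sets.Int m closed_lebesgue closed_cball)
  moreover have "bounded ((?S \<inter> ?f -` {e..}) \<inter> cball x r)"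
    by (intro bounded_Int) (simp add: bounded_cball)
  ultimately show ?thesis unfolding eq
    by (intro bounded_set_imp_lmeasurable)
qed

lemma null_by_cover:
  assumes "\<And>e. e > 0 \<Longrightarrow> \<exists>M\<in>sets lebesgue. S \<subseteq> M \<and> emeasure lebesgue M \<le> ennreal e"
  shows "negligible S"
proof -
  have "\<forall>n::nat. \<exists>M. M \<in> sets lebesgue \<and> S \<subseteq> M \<and> emeasure lebesgue M \<le> ennreal (1 / Suc n)"
  proof
    fix n :: nat
    show "\<exists>M. M \<in> sets lebesgue \<and> S \<subseteq> M \<and> emeasure lebesgue M \<le> ennreal (1 / Suc n)"
      using assms[of "1 / Suc n"] by auto
  qed
  then obtain M where M0: "\<forall>n. M n \<in> sets lebesgue \<and> S \<subseteq> M n \<and> emeasure lebesgue (M n) \<le> ennreal (1 / Suc n)"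
    by (rule choice[THEN exE])
  have Mn: "M n \<in> sets lebesgue \<and> S \<subseteq> M n \<and> emeasure lebesgue (M n) \<le> ennreal (1 / Suc n)" for n
    using M0 by (rule spec)
  note M = Mn[THEN conjunct1] Mn[THEN conjunct2, THEN conjunct1] Mn[THEN conjunct2, THEN conjunct2]
  let ?T = "\<Inter>n. M n"
  have T: "?T \<in> sets lebesgue"
    using M(1) by (intro sets.countable_INT) auto
  have small: "emeasure lebesgue ?T \<le> 0 + ennreal e" if "e > 0" for e
  proof -
    obtain n :: nat where n: "1 / Suc n < e"
      using nat_approx_posE[OF \<open>e > 0\<close>] by blast
    have "emeasure lebesgue ?T \<le> emeasure lebesgue (M n)"
      by (rule emeasure_mono) (use M(1) in auto)
    also have "\<dots> \<le> ennreal (1 / Suc n)" by (rule M(3))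
    also have "\<dots> \<le> ennreal e" using n by (intro ennreal_leI) simp
    finally show ?thesis by simp
  qed
  have "emeasure lebesgue ?T \<le> 0"
    by (rule ennreal_le_epsilon) (rule small)
  then have "emeasure lebesgue ?T = 0" by simp
  then have "?T \<in> null_sets lebesgue"
    using T by (rule null_setsI)
  then have "negligible ?T" by (simp add: negligible_iff_null_sets)
  then show ?thesis
    by (rule negligible_subset) (use M(2) in auto)
qed

lemma countable_union_small:
  assumes I: "countable I" and A: "\<And>i. i \<in> I \<Longrightarrow> A i \<in> lmeasurable"
    and sm: "\<And>G. finite G \<Longrightarrow> G \<subseteq> I \<Longrightarrow> (\<Sum>i\<in>G. measure lebesgue (A i)) \<le> e"
  shows "(\<Union>i\<in>I. A i) \<in> sets lebesgue \<and> emeasure lebesgue (\<Union>i\<in>I. A i) \<le> ennreal e"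
proof
  show "(\<Union>i\<in>I. A i) \<in> sets lebesgue"
    using A by (intro sets.countable_UN' I) auto
next
  show "emeasure lebesgue (\<Union>i\<in>I. A i) \<le> ennreal e"
  proof (cases "finite I")
    case True
    have "emeasure lebesgue (\<Union>i\<in>I. A i) \<le> (\<Sum>i\<in>I. emeasure lebesgue (A i))"
      using A by (intro emeasure_subadditive_finite True) auto
    also have "\<dots> = (\<Sum>i\<in>I. ennreal (measure lebesgue (A i)))"
      using A by (intro sum.cong refl emeasure_eq_measure2) auto
    also have "\<dots> = ennreal (\<Sum>i\<in>I. measure lebesgue (A i))"
      by (rule sum_ennreal) auto
    also have "\<dots> \<le> ennreal e"
      using sm[OF True] by (intro ennreal_leI) auto
    finally show ?thesis .
  next
    case False
    let ?f = "from_nat_into I"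
    have bij: "bij_betw ?f UNIV I"
      by (rule bij_betw_from_nat_into[OF I False])
    have rI: "range ?f = I" using bij by (simp add: bij_betw_def)
    have eqU: "(\<Union>i\<in>I. A i) = (\<Union>n. A (?f n))"
      by (metis rI image_image)
    have fin: "A (?f n) \<in> lmeasurable" for n
      using A bij by (auto simp: bij_betw_def)
    have "emeasure lebesgue (\<Union>n. A (?f n)) \<le> (\<Sum>n. emeasure lebesgue (A (?f n)))"
      using fin by (intro emeasure_subadditive_countably) auto
    also have "\<dots> \<le> ennreal e"
    proof (rule suminf_le_const)
      show "summable (\<lambda>n. emeasure lebesgue (A (?f n)))" by simp
      fix m
      have "(\<Sum>n<m. emeasure lebesgue (A (?f n))) = (\<Sum>n<m. ennreal (measure lebesgue (A (?f n))))"
        using fin by (intro sum.cong refl emeasure_eq_measure2) auto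
      also have "\<dots> = ennreal (\<Sum>n<m. measure lebesgue (A (?f n)))"
        by (rule sum_ennreal) auto
      also have "(\<Sum>n<m. measure lebesgue (A (?f n))) = (\<Sum>i\<in>?f ` {..<m}. measure lebesgue (A i))"
        using bij by (subst sum.reindex) (auto simp: bij_betw_def inj_on_def)
      also have "\<dots> \<le> e"
        using bij by (intro sm) (auto simp: bij_betw_def)
      finally show "(\<Sum>n<m. emeasure lebesgue (A (?f n))) \<le> ennreal e"
        by (simp add: ennreal_leI)
    qed
    finally show ?thesis using eqU by simp
  qed
qed

lemma eventually_pos_right: "(\<And>r. r > 0 \<Longrightarrow> P r) \<Longrightarrow> eventually P (at_right (0::real))"
  by (rule eventually_at_rightI[of 0 1]) auto

lemma approx_deriv_restrict:
  assumes F: "continuous_on {a..b} F" and ac: "a \<le> c" and db: "d \<le> b"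
    and ad: "approx_deriv F a b x L"
  shows "approx_deriv F c d x L"
  unfolding approx_deriv_badset
proof (intro allI impI)
  fix e :: real assume e: "e > 0"
  have lim: "((\<lambda>r. measure lebesgue (badset F a b x L e r) / r) \<longlongrightarrow> 0) (at_right 0)"
    using ad e unfolding approx_deriv_badset by blast
  have Fcd: "continuous_on {c..d} F"
    by (rule continuous_on_subset[OF F]) (use ac db in auto)
  have le: "measure lebesgue (badset F c d x L e r) \<le> measure lebesgue (badset F a b x L e r)" for r
  proof (rule measure_mono_fmeasurable)
    show "badset F c d x L e r \<subseteq> badset F a b x L e r"
      unfolding badset_def using ac db by auto
    show "badset F c d x L e r \<in> sets lebesgue"
      by (rule fmeasurableD[OF badset_lmeasurable[OF Fcd]])
    show "badset F a b x L e r \<in> fmeasurable lebesgue"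
      by (rule badset_lmeasurable[OF F])
  qed
  show "((\<lambda>r. measure lebesgue (badset F c d x L e r) / r) \<longlongrightarrow> 0) (at_right 0)"
  proof (rule tendsto_sandwich[OF _ _ tendsto_const lim])
    show "\<forall>\<^sub>F r in at_right 0. measure lebesgue (badset F c d x L e r) / r
              \<le> measure lebesgue (badset F a b x L e r) / r"
      by (rule eventually_pos_right) (intro divide_right_mono le less_imp_le)
    show "\<forall>\<^sub>F r in at_right 0. 0 \<le> measure lebesgue (badset F c d x L e r) / r"
      by (rule eventually_pos_right) simp
  qed
qed

lemma approx_deriv_diff:
  assumes F: "continuous_on {a..b} F" and G: "continuous_on {a..b} G"
    and aF: "approx_deriv F a b x L" and aG: "approx_deriv G a b x L"
  shows "approx_deriv (\<lambda>y. F y - G y) a b x 0"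
  unfolding approx_deriv_badset
proof (intro allI impI)
  fix e :: real assume e: "e > 0"
  let ?BF = "\<lambda>r. badset F a b x L (e/2) r"
  let ?BG = "\<lambda>r. badset G a b x L (e/2) r"
  let ?BH = "\<lambda>r. badset (\<lambda>y. F y - G y) a b x 0 e r"
  have e2: "e/2 > 0" using e by simp
  have lim: "((\<lambda>r. measure lebesgue (?BF r) / r + measure lebesgue (?BG r) / r) \<longlongrightarrow> 0 + 0) (at_right 0)"
    using aF aG e2 unfolding approx_deriv_badset by (intro tendsto_add) blast+
  have sub: "?BH r \<subseteq> ?BF r \<union> ?BG r" for r
  proof
    fix y assume "y \<in> ?BH r"
    then have y: "y \<in> {a..b}" "y \<noteq> x" "\<bar>y - x\<bar> \<le> r"
      and q: "e \<le> \<bar>((F y - G y) - (F x - G x)) / (y - x) - 0\<bar>"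
      unfolding badset_def by blast+
    have eq: "((F y - G y) - (F x - G x)) / (y - x) - 0 = ((F y - F x)/(y-x) - L) - ((G y - G x)/(y-x) - L)"
      by (simp add: diff_divide_distrib)
    have "e \<le> \<bar>((F y - F x)/(y-x) - L) - ((G y - G x)/(y-x) - L)\<bar>"
      using q unfolding eq .
    then have "e \<le> \<bar>(F y - F x)/(y-x) - L\<bar> + \<bar>(G y - G x)/(y-x) - L\<bar>"
      using abs_triangle_ineq4[of "(F y - F x)/(y-x) - L" "(G y - G x)/(y-x) - L"] by linarith
    then have "e/2 \<le> \<bar>(F y - F x)/(y-x) - L\<bar> \<or> e/2 \<le> \<bar>(G y - G x)/(y-x) - L\<bar>"
      by linarith
    then show "y \<in> ?BF r \<union> ?BG r" using y unfolding badset_def by blast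
  qed
  have mH: "?BH r \<in> lmeasurable" for r
    by (rule badset_lmeasurable[OF continuous_on_diff[OF F G]])
  have le: "measure lebesgue (?BH r) \<le> measure lebesgue (?BF r) + measure lebesgue (?BG r)" for r
  proof -
    have "measure lebesgue (?BH r) \<le> measure lebesgue (?BF r \<union> ?BG r)"
      by (rule measure_mono_fmeasurable[OF sub fmeasurableD[OF mH]])
         (intro fmeasurable.Un badset_lmeasurable F G)
    also have "\<dots> \<le> measure lebesgue (?BF r) + measure lebesgue (?BG r)"
      by (rule measure_Un_le) (intro fmeasurableD badset_lmeasurable F G)+
    finally show ?thesis .
  qed
  show "((\<lambda>r. measure lebesgue (?BH r) / r) \<longlongrightarrow> 0) (at_right 0)"
  proof (rule tendsto_sandwich[OF _ _ tendsto_const lim[unfolded add_0_right]])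
    show "\<forall>\<^sub>F r in at_right 0. measure lebesgue (?BH r) / r
              \<le> measure lebesgue (?BF r) / r + measure lebesgue (?BG r) / r"
      by (rule eventually_pos_right) (simp only: add_divide_distrib[symmetric], intro divide_right_mono le less_imp_le)
    show "\<forall>\<^sub>F r in at_right 0. 0 \<le> measure lebesgue (?BH r) / r"
      by (rule eventually_pos_right) simp
  qed
qed

lemma open_intervals_sep:
  fixes u v u' v' :: real
  assumes "u < v" "u' < v'" "{u<..<v} \<inter> {u'<..<v'} = {}"
  shows "v \<le> u' \<or> v' \<le> u"
proof (rule ccontr)
  assume "\<not> (v \<le> u' \<or> v' \<le> u)"
  then have h: "u' < v" "u < v'" by auto
  define z where "z = (max u u' + min v v') / 2"
  have "max u u' < min v v'" using assms(1,2) h by linarith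
  then have "z \<in> {u<..<v} \<inter> {u'<..<v'}" unfolding z_def by auto
  then show False using assms(3) by blast
qed

lemma AC_image_null:
  fixes H :: "real \<Rightarrow> real"
  assumes cd: "c < d" and H: "continuous_on {c..d} H" and E: "E \<subseteq> {c..d}"
    and AC: "AC_on_set H E" and N: "negligible N" and Nsub: "N \<subseteq> {c..d}"
  shows "negligible (H ` (N \<inter> E))"
proof (rule null_by_cover)
  fix e :: real assume e: "e > 0"
  define \<eta> where "\<eta> = (SOME \<eta>. \<eta> > 0 \<and> (\<forall>(n::nat) (cc::nat \<Rightarrow> real) (dd::nat \<Rightarrow> real). (\<forall>i<n. cc i \<in> E \<and> dd i \<in> E \<and> cc i \<le> dd i) \<and>
        (\<forall>i<n. \<forall>j<n. i \<noteq> j \<longrightarrow> dd i \<le> cc j \<or> dd j \<le> cc i) \<and>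
        (\<Sum>i<n. dd i - cc i) < \<eta> \<longrightarrow> (\<Sum>i<n. \<bar>H (dd i) - H (cc i)\<bar>) < e))"
  have \<eta>all: "\<eta> > 0 \<and> (\<forall>(n::nat) (cc::nat \<Rightarrow> real) (dd::nat \<Rightarrow> real). (\<forall>i<n. cc i \<in> E \<and> dd i \<in> E \<and> cc i \<le> dd i) \<and>
        (\<forall>i<n. \<forall>j<n. i \<noteq> j \<longrightarrow> dd i \<le> cc j \<or> dd j \<le> cc i) \<and>
        (\<Sum>i<n. dd i - cc i) < \<eta> \<longrightarrow> (\<Sum>i<n. \<bar>H (dd i) - H (cc i)\<bar>) < e)"
    unfolding \<eta>_def by (rule someI_ex[OF AC[unfolded AC_on_set_def, rule_format, OF e]])
  have \<eta>: "\<eta> > 0" using \<eta>all by (rule conjunct1)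
  note AC\<eta> = \<eta>all[THEN conjunct2, rule_format]
  have Nm: "N \<in> lmeasurable" and N0: "measure lebesgue N = 0"
    using N by (rule negligible_imp_measurable, rule negligible_imp_measure0)
  have Nsub': "N \<subseteq> cbox c d" using Nsub by simp
  have eta2: "\<eta>/2 > 0" using \<eta> by simp
  obtain \<D> where D1: "countable \<D>"
    and D2: "\<And>K. K \<in> \<D> \<Longrightarrow> K \<subseteq> cbox c d \<and> K \<noteq> {} \<and> (\<exists>u v. K = cbox u v)"
    and D3: "pairwise (\<lambda>A B. interior A \<inter> interior B = {}) \<D>"
    and D4: "\<And>u v. cbox u v \<in> \<D> \<Longrightarrow> \<exists>n. \<forall>i \<in> Basis. v \<bullet> i - u \<bullet> i = (d \<bullet> i - c \<bullet> i)/2^n"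
    and D5: "\<And>K. \<lbrakk>K \<in> \<D>; box c d \<noteq> {}\<rbrakk> \<Longrightarrow> interior K \<noteq> {}"
    and D6: "N \<subseteq> \<Union>\<D>" and D7: "\<Union>\<D> \<in> lmeasurable"
    and D8: "measure lebesgue (\<Union>\<D>) \<le> measure lebesgue N + \<eta>/2"
    using measurable_outer_intervals_bounded[OF Nm Nsub' eta2] by blast
  have boxne: "box c d \<noteq> {}" using cd by simp
  have Kform: "\<exists>u v. K = {u..v} \<and> u < v \<and> {u..v} \<subseteq> {c..d}" if K: "K \<in> \<D>" for K
  proof -
    obtain u v where uv: "K = cbox u v" using D2[OF K] by blast
    have "K \<subseteq> cbox c d" using D2[OF K] by blast
    moreover have "interior K \<noteq> {}" using D5[OF K boxne] .
    ultimately show ?thesis using uv by (intro exI[of _ u] exI[of _ v]) auto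
  qed
  have Ksep: "\<exists>u v u' v'. K = {u..v} \<and> K' = {u'..v'} \<and> (v \<le> u' \<or> v' \<le> u)"
    if K: "K \<in> \<D>" and K': "K' \<in> \<D>" and ne: "K \<noteq> K'" for K K'
  proof -
    obtain u v where uv: "K = {u..v}" "u < v" using Kform[OF K] by blast
    obtain u' v' where uv': "K' = {u'..v'}" "u' < v'" using Kform[OF K'] by blast
    have "interior K \<inter> interior K' = {}" using D3 K K' ne unfolding pairwise_def by blast
    then have "{u<..<v} \<inter> {u'<..<v'} = {}" using uv uv' by simp
    then have "v \<le> u' \<or> v' \<le> u" by (rule open_intervals_sep[OF uv(2) uv'(2)])
    then show ?thesis using uv uv' by blast
  qed
  have Kmeas: "K \<in> lmeasurable" if "K \<in> \<D>" for K
    using Kform[OF that] by auto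
  have "compact (H ` {c..d})" by (rule compact_continuous_image[OF H compact_Icc])
  then have "bounded (H ` {c..d})" by (rule compact_imp_bounded)
  then obtain B where B0: "\<forall>y\<in>H ` {c..d}. \<bar>y\<bar> \<le> B" unfolding bounded_real by blast
  have B: "\<And>x. x \<in> {c..d} \<Longrightarrow> \<bar>H x\<bar> \<le> B" using B0 by blast
  define lo where "lo K = Inf (H ` (E \<inter> K))" for K
  define hi where "hi K = Sup (H ` (E \<inter> K))" for K
  have bdda: "bdd_above (H ` (E \<inter> K))" for K
    by (rule bdd_aboveI[of _ B]) (use B E in force)
  have bddb: "bdd_below (H ` (E \<inter> K))" for K
    by (rule bdd_belowI[of _ "-B"]) (use B E in force)
  define \<D>' where "\<D>' = {K \<in> \<D>. E \<inter> K \<noteq> {}}"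
  define J where "J K = {lo K..hi K}" for K
  have lohi: "lo K \<le> hi K" if "K \<in> \<D>'" for K
    unfolding lo_def hi_def by (rule cInf_le_cSup) (use that bdda bddb in \<open>auto simp: \<D>'_def\<close>)
  have mJ: "measure lebesgue (J K) = hi K - lo K" if "K \<in> \<D>'" for K
    using lohi[OF that] unfolding J_def by simp
  have cover: "H ` (N \<inter> E) \<subseteq> (\<Union>K\<in>\<D>'. J K)"
  proof
    fix w assume "w \<in> H ` (N \<inter> E)"
    then obtain x where x: "x \<in> N" "x \<in> E" "w = H x" by blast
    then obtain K where K: "K \<in> \<D>" "x \<in> K" using D6 by blast
    then have K': "K \<in> \<D>'" using x unfolding \<D>'_def by blast
    have "lo K \<le> H x" unfolding lo_def by (rule cInf_lower) (use x K bddb in auto)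
    moreover have "H x \<le> hi K" unfolding hi_def by (rule cSup_upper) (use x K bdda in auto)
    ultimately show "w \<in> (\<Union>K\<in>\<D>'. J K)" using K' x unfolding J_def by auto
  qed
  have sumle: "(\<Sum>K\<in>G. measure lebesgue (J K)) \<le> e" if G: "finite G" "G \<subseteq> \<D>'" for G
  proof -
    have GD: "G \<subseteq> \<D>" using G(2) unfolding \<D>'_def by blast
    have sum_eq: "(\<Sum>K\<in>G. measure lebesgue (J K)) = (\<Sum>K\<in>G. hi K - lo K)"
      using mJ G(2) by (intro sum.cong) auto
    define n where "n = card G"
    define \<phi> where "\<phi> = from_nat_into G"
    have bij: "bij_betw \<phi> {..<n} G" unfolding \<phi>_def n_def by (rule bij_betw_from_nat_into_finite[OF G(1)])
    have \<phi>G: "\<phi> i \<in> G" if "i < n" for i using bij that by (auto dest: bij_betwE)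
    have \<phi>inj: "\<phi> i \<noteq> \<phi> j" if "i < n" "j < n" "i \<noteq> j" for i j
      using bij that unfolding bij_betw_def inj_on_def by blast
    have sumG: "(\<Sum>K\<in>G. f K) = (\<Sum>i<n. f (\<phi> i))" for f :: "real set \<Rightarrow> real"
      using sum.reindex_bij_betw[OF bij, of f] by simp
    show ?thesis unfolding sum_eq
    proof (rule field_le_epsilon)
      fix \<delta> :: real assume \<delta>: "\<delta> > 0"
      define \<delta>' where "\<delta>' = \<delta> / (2 * (real n + 1))"
      have \<delta>': "\<delta>' > 0" unfolding \<delta>'_def using \<delta> by simp
      have "\<forall>K\<in>G. \<exists>p. fst p \<in> E \<inter> K \<and> snd p \<in> E \<inter> K \<and> hi K - \<delta>' < H (fst p) \<and> H (snd p) < lo K + \<delta>'"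
      proof
        fix K assume K: "K \<in> G"
        have ne: "H ` (E \<inter> K) \<noteq> {}" using K G(2) unfolding \<D>'_def by blast
        have "hi K - \<delta>' < hi K" using \<delta>' by simp
        then obtain s where s: "s \<in> E \<inter> K" "hi K - \<delta>' < H s"
          unfolding hi_def using less_cSup_iff[OF ne bdda] by blast
        have "lo K < lo K + \<delta>'" using \<delta>' by simp
        then obtain t where t: "t \<in> E \<inter> K" "H t < lo K + \<delta>'"
          unfolding lo_def using cInf_less_iff[OF ne bddb] by blast
        show "\<exists>p. fst p \<in> E \<inter> K \<and> snd p \<in> E \<inter> K \<and> hi K - \<delta>' < H (fst p) \<and> H (snd p) < lo K + \<delta>'"
          by (rule exI[of _ "(s,t)"]) (use s t in simp)
      qed
      then obtain p where p: "\<And>K. K \<in> G \<Longrightarrow> fst (p K) \<in> E \<inter> K \<and> snd (p K) \<in> E \<inter> K \<and>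
             hi K - \<delta>' < H (fst (p K)) \<and> H (snd (p K)) < lo K + \<delta>'"
        using bchoice[of G] by metis
      define cc where "cc i = min (fst (p (\<phi> i))) (snd (p (\<phi> i)))" for i
      define dd where "dd i = max (fst (p (\<phi> i))) (snd (p (\<phi> i)))" for i
      have ccdd_in: "cc i \<in> \<phi> i \<and> dd i \<in> \<phi> i \<and> cc i \<in> E \<and> dd i \<in> E \<and> cc i \<le> dd i" if "i < n" for i
        using p[OF \<phi>G[OF that]] unfolding cc_def dd_def by (auto simp: min_def max_def)
      have absdd: "\<bar>H (dd i) - H (cc i)\<bar> = \<bar>H (fst (p (\<phi> i))) - H (snd (p (\<phi> i)))\<bar>" for i
        unfolding cc_def dd_def by (auto simp: min_def max_def abs_minus_commute)
      have c1: "\<forall>i<n. cc i \<in> E \<and> dd i \<in> E \<and> cc i \<le> dd i" using ccdd_in by blast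
      have c2: "\<forall>i<n. \<forall>j<n. i \<noteq> j \<longrightarrow> dd i \<le> cc j \<or> dd j \<le> cc i"
      proof (intro allI impI)
        fix i j assume ij: "i < n" "j < n" "i \<noteq> j"
        obtain u v u' v' where uv: "\<phi> i = {u..v}" "\<phi> j = {u'..v'}" "v \<le> u' \<or> v' \<le> u"
          using Ksep[of "\<phi> i" "\<phi> j"] \<phi>G[OF ij(1)] \<phi>G[OF ij(2)] \<phi>inj[OF ij] GD by blast
        show "dd i \<le> cc j \<or> dd j \<le> cc i"
          using ccdd_in[OF ij(1)] ccdd_in[OF ij(2)] uv by auto
      qed
      have len: "dd i - cc i \<le> measure lebesgue (\<phi> i)" if i: "i < n" for i
      proof -
        have "\<phi> i \<in> \<D>" using \<phi>G[OF i] GD by blast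
        then obtain u v where uv: "\<phi> i = {u..v}" "u < v" using Kform by blast
        show ?thesis using ccdd_in[OF i] uv by simp
      qed
      have negint: "negligible (K \<inter> K')" if KK: "K \<in> G" "K' \<in> G" "K \<noteq> K'" for K K'
      proof -
        have "K \<in> \<D>" "K' \<in> \<D>" using KK GD by blast+
        then obtain u v u' v' where uv: "K = {u..v}" "K' = {u'..v'}" "v \<le> u' \<or> v' \<le> u"
          using Ksep[of K K'] KK(3) by blast
        have "K \<inter> K' \<subseteq> {u', v'}" using uv by auto
        moreover have "negligible {u', v'}" by simp
        ultimately show ?thesis by (rule negligible_subset[rotated])
      qed
      have "(\<Sum>i<n. dd i - cc i) \<le> (\<Sum>i<n. measure lebesgue (\<phi> i))"
        by (rule sum_mono) (rule len, simp)
      also have "\<dots> = (\<Sum>K\<in>G. measure lebesgue K)" by (rule sumG[symmetric])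
      also have "\<dots> = measure lebesgue (\<Union>G)"
        by (rule measure_negligible_finite_Union[symmetric, OF G(1)])
           (use Kmeas GD negint in \<open>auto simp: pairwise_def\<close>)
      also have "\<dots> \<le> measure lebesgue (\<Union>\<D>)"
      proof (rule measure_mono_fmeasurable)
        show "\<Union>G \<subseteq> \<Union>\<D>" using GD by blast
        show "\<Union>G \<in> sets lebesgue" using Kmeas GD G(1) by (intro sets.finite_Union) auto
        show "\<Union>\<D> \<in> fmeasurable lebesgue" by (rule D7)
      qed
      also have "\<dots> < \<eta>" using D8 N0 \<eta> by simp
      finally have "(\<Sum>i<n. dd i - cc i) < \<eta>" .
      then have ACsum: "(\<Sum>i<n. \<bar>H (dd i) - H (cc i)\<bar>) < e"
        using c1 c2 by (intro AC\<eta> conjI) assumption+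
      have each: "hi (\<phi> i) - lo (\<phi> i) \<le> \<bar>H (dd i) - H (cc i)\<bar> + 2 * \<delta>'" if "i < n" for i
        using p[OF \<phi>G[OF that]] unfolding absdd by linarith
      have "(\<Sum>K\<in>G. hi K - lo K) = (\<Sum>i<n. hi (\<phi> i) - lo (\<phi> i))" by (rule sumG)
      also have "\<dots> \<le> (\<Sum>i<n. \<bar>H (dd i) - H (cc i)\<bar> + 2 * \<delta>')"
        by (rule sum_mono) (rule each, simp)
      also have "\<dots> = (\<Sum>i<n. \<bar>H (dd i) - H (cc i)\<bar>) + real n * (2 * \<delta>')"
        by (simp add: sum.distrib)
      also have "real n * (2 * \<delta>') \<le> \<delta>"
      proof -
        have "real n * (2 * \<delta>') = \<delta> * (real n / (real n + 1))"
          unfolding \<delta>'_def by (simp add: field_simps)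
        also have "\<dots> \<le> \<delta> * 1" using \<delta> by (intro mult_left_mono) auto
        finally show ?thesis by simp
      qed
      finally show "(\<Sum>K\<in>G. hi K - lo K) \<le> e + \<delta>" using ACsum by linarith
    qed
  qed
  have cnt: "countable \<D>'" using D1 unfolding \<D>'_def by simp
  have mJ': "J K \<in> lmeasurable" for K unfolding J_def by simp
  have res: "(\<Union>K\<in>\<D>'. J K) \<in> sets lebesgue \<and> emeasure lebesgue (\<Union>K\<in>\<D>'. J K) \<le> ennreal e"
    by (rule countable_union_small[OF cnt mJ' sumle])
  show "\<exists>M\<in>sets lebesgue. H ` (N \<inter> E) \<subseteq> M \<and> emeasure lebesgue M \<le> ennreal e"
    using res cover by blast
qed

lemma ap0_lip:
  fixes H :: "real \<Rightarrow> real"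
  assumes H: "continuous_on {c..d} H" and xy: "x \<in> {c..d}" "y \<in> {c..d}" "x < y"
    and mx: "measure lebesgue (badset H c d x 0 \<epsilon> (y - x)) < (y - x) / 4"
    and my: "measure lebesgue (badset H c d y 0 \<epsilon> (y - x)) < (y - x) / 4"
  shows "\<bar>H y - H x\<bar> \<le> \<epsilon> * (y - x)"
proof -
  let ?r = "y - x"
  let ?A = "badset H c d x 0 \<epsilon> ?r"
  let ?B = "badset H c d y 0 \<epsilon> ?r"
  have mA: "?A \<in> lmeasurable" and mB: "?B \<in> lmeasurable"
    by (rule badset_lmeasurable[OF H])+
  have "\<not> {x<..<y} \<subseteq> ?A \<union> ?B"
  proof
    assume sub: "{x<..<y} \<subseteq> ?A \<union> ?B"
    have "measure lebesgue {x<..<y} \<le> measure lebesgue (?A \<union> ?B)"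
      by (rule measure_mono_fmeasurable[OF sub]) (auto intro: fmeasurable.Un mA mB)
    also have "\<dots> \<le> measure lebesgue ?A + measure lebesgue ?B"
      by (rule measure_Un_le) (intro fmeasurableD mA mB)+
    finally have "y - x \<le> measure lebesgue ?A + measure lebesgue ?B"
      using xy(3) by simp
    moreover have "measure lebesgue ?A + measure lebesgue ?B < (y - x) / 4 + (y - x) / 4"
      by (rule add_strict_mono[OF mx my])
    moreover have "(y - x) / 4 + (y - x) / 4 < y - x" using xy(3) by simp
    ultimately show False by linarith
  qed
  then obtain z where z0: "z \<in> {x<..<y}" "z \<notin> ?A \<union> ?B" by blast
  then have z: "x < z" "z < y" "z \<notin> ?A" "z \<notin> ?B" by simp_all
  have zcd: "z \<in> {c..d}" using z xy by auto
  have "\<not> (\<epsilon> \<le> \<bar>(H z - H x) / (z - x) - 0\<bar>)"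
    using z(1,2,3) zcd unfolding badset_def by auto
  then have "\<bar>H z - H x\<bar> / (z - x) < \<epsilon>" using z(1) by (simp add: abs_divide)
  then have 1: "\<bar>H z - H x\<bar> < \<epsilon> * (z - x)" using z(1) by (simp add: pos_divide_less_eq)
  have "\<not> (\<epsilon> \<le> \<bar>(H z - H y) / (z - y) - 0\<bar>)"
    using z(1,2,4) zcd unfolding badset_def by auto
  then have "\<bar>H z - H y\<bar> / (y - z) < \<epsilon>" using z(2)
    by (simp add: abs_divide abs_minus_commute[of z y])
  then have 2: "\<bar>H z - H y\<bar> < \<epsilon> * (y - z)" using z(2) by (simp add: pos_divide_less_eq)
  have "\<bar>H y - H x\<bar> \<le> \<bar>H z - H x\<bar> + \<bar>H z - H y\<bar>" by linarith
  also have "\<dots> \<le> \<epsilon> * (z - x) + \<epsilon> * (y - z)" using 1 2 by linarith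
  also have "\<dots> = \<epsilon> * (y - x)" by (simp add: algebra_simps)
  finally show ?thesis .
qed

lemma ap0_image_null:
  fixes H :: "real \<Rightarrow> real"
  assumes cd: "c < d" and H: "continuous_on {c..d} H" and Z: "Z \<subseteq> {c..d}"
    and ap: "\<And>x. x \<in> Z \<Longrightarrow> approx_deriv H c d x 0"
  shows "negligible (H ` Z)"
proof (rule null_by_cover)
  fix e :: real assume e: "e > 0"
  define \<epsilon> where "\<epsilon> = e / (4 * (d - c))"
  have \<epsilon>: "\<epsilon> > 0" unfolding \<epsilon>_def using e cd by simp
  define Zk where "Zk k = {x \<in> Z. \<forall>r. 0 < r \<and> r < 1 / Suc k \<longrightarrow> measure lebesgue (badset H c d x 0 \<epsilon> r) < r / 4}" for k :: nat
  have Zcover: "\<exists>k. x \<in> Zk k" if x: "x \<in> Z" for x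
  proof -
    have lim: "((\<lambda>r. measure lebesgue (badset H c d x 0 \<epsilon> r) / r) \<longlongrightarrow> 0) (at_right 0)"
      using ap[OF x] \<epsilon> unfolding approx_deriv_badset by blast
    have "eventually (\<lambda>r. measure lebesgue (badset H c d x 0 \<epsilon> r) / r < 1/4) (at_right 0)"
      by (rule order_tendstoD(2)[OF lim]) simp
    then obtain b :: real where b: "b > 0" "\<And>r. r > 0 \<Longrightarrow> r < b \<Longrightarrow> measure lebesgue (badset H c d x 0 \<epsilon> r) / r < 1/4"
      unfolding eventually_at_right_field by auto
    obtain k :: nat where k: "1 / Suc k < b" using nat_approx_posE[OF b(1)] by blast
    have "measure lebesgue (badset H c d x 0 \<epsilon> r) < r / 4" if "0 < r" "r < 1 / Suc k" for r
    proof -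
      have "measure lebesgue (badset H c d x 0 \<epsilon> r) / r < 1/4" using b(2)[of r] that k by simp
      then show ?thesis using that(1) by (simp add: pos_divide_less_eq)
    qed
    then show ?thesis using x unfolding Zk_def by blast
  qed
  have Zmono: "Zk k \<subseteq> Zk j" if "k \<le> j" for k j
  proof -
    have "1 / real (Suc j) \<le> 1 / real (Suc k)" using that by (simp add: frac_le)
    then show ?thesis unfolding Zk_def by force
  qed
  have ZkZ: "Zk k \<subseteq> Z" for k unfolding Zk_def by blast
  have lip: "\<bar>H y - H x\<bar> \<le> \<epsilon> * \<bar>y - x\<bar>" if "x \<in> Zk k" "y \<in> Zk k" "\<bar>y - x\<bar> < 1 / Suc k" for x y k
  proof -
    have gen: "\<bar>H q - H p\<bar> \<le> \<epsilon> * (q - p)" if pq: "p \<in> Zk k" "q \<in> Zk k" "p < q" "q - p < 1 / Suc k" for p q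
    proof (rule ap0_lip[OF H])
      show "p \<in> {c..d}" "q \<in> {c..d}" using pq ZkZ Z by blast+
      show "p < q" by (rule pq(3))
      show "measure lebesgue (badset H c d p 0 \<epsilon> (q - p)) < (q - p) / 4"
        using pq unfolding Zk_def by auto
      show "measure lebesgue (badset H c d q 0 \<epsilon> (q - p)) < (q - p) / 4"
        using pq unfolding Zk_def by auto
    qed
    consider "x < y" | "x = y" | "y < x" by linarith
    then show ?thesis
    proof cases
      case 1 then show ?thesis using gen[of x y] that by simp
    next
      case 2 then show ?thesis by simp
    next
      case 3 then show ?thesis using gen[of y x] that by (simp add: abs_minus_commute)
    qed
  qed
  define m where "m k = nat \<lceil>(d - c) * Suc k\<rceil> + 1" for k :: nat
  define h where "h k = (d - c) / m k" for k
  have mpos: "real (m k) > 0" for k unfolding m_def by simp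
  have hpos: "h k > 0" for k unfolding h_def using mpos cd by simp
  have hsmall: "h k < 1 / Suc k" for k
  proof -
    have "(d - c) * Suc k < real (m k)" unfolding m_def by linarith
    then have "(d - c) < real (m k) / Suc k" by (simp add: pos_less_divide_eq)
    then show ?thesis unfolding h_def using mpos by (simp add: divide_simps mult.commute)
  qed
  have mh: "real (m k) * h k = d - c" for k unfolding h_def using mpos by simp
  define P where "P k i = {c + real i * h k .. c + (real i + 1) * h k}" for k i
  have inP: "\<exists>i \<le> m k. x \<in> P k i" if x: "x \<in> {c..d}" for x k
  proof -
    define t where "t = (x - c) / h k"
    have t0: "t \<ge> 0" unfolding t_def using x hpos[of k] by (simp add: divide_nonneg_pos)
    have tm: "t \<le> m k" unfolding t_def using x hpos[of k] mh[of k]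
      by (simp add: divide_le_eq mult.commute)
    define i where "i = nat \<lfloor>t\<rfloor>"
    have i1: "real i \<le> t" "t < real i + 1" unfolding i_def using t0 by linarith+
    have "i \<le> m k" using i1 tm by linarith
    moreover have "x \<in> P k i"
    proof -
      have "real i * h k \<le> x - c" using i1(1) hpos unfolding t_def by (simp add: le_divide_eq)
      moreover have "x - c < (real i + 1) * h k" using i1(2) hpos unfolding t_def by (simp add: divide_less_eq)
      ultimately show ?thesis unfolding P_def by simp
    qed
    ultimately show ?thesis by blast
  qed
  define C where "C k i = (if Zk k \<inter> P k i = {} then {} else cball (H (SOME z. z \<in> Zk k \<inter> P k i)) (\<epsilon> * h k))" for k i
  define M where "M k = (\<Union>i\<in>{..m k}. C k i)" for k
  have CM: "C k i \<in> lmeasurable" for k i unfolding C_def by simp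
  have HM: "H ` Zk k \<subseteq> M k" for k
  proof
    fix w assume "w \<in> H ` Zk k"
    then obtain x where x: "x \<in> Zk k" "w = H x" by blast
    have "x \<in> {c..d}" using x ZkZ Z by blast
    then obtain i where i: "i \<le> m k" "x \<in> P k i" using inP by blast
    have ne: "Zk k \<inter> P k i \<noteq> {}" using x i by blast
    define z where "z = (SOME z. z \<in> Zk k \<inter> P k i)"
    have z: "z \<in> Zk k \<inter> P k i" unfolding z_def using ne by (rule someI_ex[OF ex_in_conv[THEN iffD2]])
    have "\<bar>x - z\<bar> \<le> h k" using z i(2) unfolding P_def by (auto simp: algebra_simps abs_le_iff)
    then have "\<bar>x - z\<bar> < 1 / Suc k" using hsmall[of k] by linarith
    then have "\<bar>H x - H z\<bar> \<le> \<epsilon> * \<bar>x - z\<bar>" using lip[of z k x] x z by blast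
    also have "\<dots> \<le> \<epsilon> * h k" using \<open>\<bar>x - z\<bar> \<le> h k\<close> \<epsilon> by (simp add: mult_left_mono)
    finally have "H x \<in> C k i" using ne unfolding C_def z_def[symmetric] by (simp add: dist_real_def abs_minus_commute)
    then show "w \<in> M k" using i x unfolding M_def by blast
  qed
  have Msets: "M k \<in> sets lebesgue" for k
    unfolding M_def using CM by (intro sets.finite_UN) (auto intro: fmeasurableD)
  have Mbound: "measure lebesgue (M k) \<le> e" for k
  proof -
    have "measure lebesgue (M k) \<le> (\<Sum>i\<le>m k. measure lebesgue (C k i))"
      unfolding M_def by (rule measure_UNION_le) (auto intro: fmeasurableD CM)
    also have "\<dots> \<le> (\<Sum>i\<le>m k. 2 * (\<epsilon> * h k))"
    proof (rule sum_mono)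
      fix i
      have "0 \<le> \<epsilon> * h k" using \<epsilon> hpos[of k] by simp
      then show "measure lebesgue (C k i) \<le> 2 * (\<epsilon> * h k)"
        by (cases "Zk k \<inter> P k i = {}") (simp_all add: C_def cball_eq_atLeastAtMost)
    qed
    also have "\<dots> = (real (m k) + 1) * 2 * \<epsilon> * h k" by simp
    also have "\<dots> = 2 * \<epsilon> * (real (m k) * h k) + 2 * \<epsilon> * h k" by (simp add: algebra_simps)
    also have "\<dots> \<le> 2 * \<epsilon> * (d - c) + 2 * \<epsilon> * (d - c)"
    proof -
      have m1: "1 \<le> real (m k)" unfolding m_def by simp
      have "h k * 1 \<le> h k * real (m k)" by (rule mult_left_mono[OF m1]) (use hpos[of k] in simp)
      then have "h k \<le> d - c" using mh[of k] by (simp add: mult.commute)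
      then show ?thesis unfolding mh using \<epsilon> by (simp add: mult_left_mono)
    qed
    also have "\<dots> = \<epsilon> * (4 * (d - c))" by (simp add: algebra_simps)
    also have "\<dots> = e" unfolding \<epsilon>_def using cd by (simp add: field_simps)
    finally show ?thesis .
  qed
  have Mlm: "M k \<in> lmeasurable" for k
    unfolding M_def using CM by (intro fmeasurable.finite_UN) auto
  define B where "B k = (\<Inter>j. M (k + j))" for k
  have Bsets: "B k \<in> sets lebesgue" for k
    unfolding B_def using Msets by (intro sets.countable_INT) auto
  have Binc: "incseq B"
  proof (rule incseq_SucI)
    fix k
    show "B k \<subseteq> B (Suc k)" unfolding B_def
    proof
      fix w assume w: "w \<in> (\<Inter>j. M (k + j))"
      show "w \<in> (\<Inter>j. M (Suc k + j))"
      proof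
        fix j :: nat
        have "w \<in> M (k + Suc j)" using w by blast
        then show "w \<in> M (Suc k + j)" by simp
      qed
    qed
  qed
  have HB: "H ` Z \<subseteq> (\<Union>k. B k)"
  proof
    fix w assume "w \<in> H ` Z"
    then obtain x where x: "x \<in> Z" "w = H x" by blast
    obtain k where k: "x \<in> Zk k" using Zcover[OF x(1)] by blast
    have "w \<in> M (k + j)" for j using HM[of "k + j"] Zmono[of k "k + j"] k x(2) by auto
    then show "w \<in> (\<Union>k. B k)" unfolding B_def by blast
  qed
  have Ble: "emeasure lebesgue (B k) \<le> ennreal e" for k
  proof -
    have sub: "B k \<subseteq> M (k + 0)" unfolding B_def by (rule INT_lower) simp
    have "emeasure lebesgue (B k) \<le> emeasure lebesgue (M (k + 0))"
      by (rule emeasure_mono[OF sub Msets])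
    also have "\<dots> = ennreal (measure lebesgue (M k))" using emeasure_eq_measure2[OF Mlm[of k]] by simp
    also have "\<dots> \<le> ennreal e" by (rule ennreal_leI[OF Mbound])
    finally show ?thesis .
  qed
  have "emeasure lebesgue (\<Union>k. B k) = (SUP k. emeasure lebesgue (B k))"
    by (rule SUP_emeasure_incseq[symmetric]) (use Bsets Binc in auto)
  also have "\<dots> \<le> ennreal e" by (rule SUP_least) (rule Ble)
  finally have "emeasure lebesgue (\<Union>k. B k) \<le> ennreal e" .
  moreover have "(\<Union>k. B k) \<in> sets lebesgue" using Bsets by (intro sets.countable_UN) auto
  ultimately show "\<exists>M\<in>sets lebesgue. H ` Z \<subseteq> M \<and> emeasure lebesgue M \<le> ennreal e"
    using HB by blast
qed

definition ACw :: "(real \<Rightarrow> real) \<Rightarrow> real set \<Rightarrow> real \<Rightarrow> real \<Rightarrow> bool" where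
  "ACw F E e \<eta> \<longleftrightarrow> (\<forall>(n::nat) (c::nat \<Rightarrow> real) (d::nat \<Rightarrow> real).
        (\<forall>i<n. c i \<in> E \<and> d i \<in> E \<and> c i \<le> d i) \<and>
        (\<forall>i<n. \<forall>j<n. i \<noteq> j \<longrightarrow> d i \<le> c j \<or> d j \<le> c i) \<and>
        (\<Sum>i<n. d i - c i) < \<eta>
        \<longrightarrow> (\<Sum>i<n. \<bar>F (d i) - F (c i)\<bar>) < e)"

lemma AC_on_set_alt: "AC_on_set F E \<longleftrightarrow> (\<forall>e>0. \<exists>\<eta>>0. ACw F E e \<eta>)"
  unfolding AC_on_set_def ACw_def by (rule refl)

lemma ACw_mono:
  assumes A: "ACw F E e \<eta>" and sub: "E' \<subseteq> E"
  shows "ACw F E' e \<eta>"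
  unfolding ACw_def
proof (intro allI impI)
  fix n :: nat and c d :: "nat \<Rightarrow> real"
  assume h: "(\<forall>i<n. c i \<in> E' \<and> d i \<in> E' \<and> c i \<le> d i) \<and>
        (\<forall>i<n. \<forall>j<n. i \<noteq> j \<longrightarrow> d i \<le> c j \<or> d j \<le> c i) \<and> (\<Sum>i<n. d i - c i) < \<eta>"
  have h1: "\<forall>i<n. c i \<in> E \<and> d i \<in> E \<and> c i \<le> d i" using h sub by blast
  have A': "(\<forall>i<n. c i \<in> E \<and> d i \<in> E \<and> c i \<le> d i) \<and>
        (\<forall>i<n. \<forall>j<n. i \<noteq> j \<longrightarrow> d i \<le> c j \<or> d j \<le> c i) \<and> (\<Sum>i<n. d i - c i) < \<eta>
        \<longrightarrow> (\<Sum>i<n. \<bar>F (d i) - F (c i)\<bar>) < e"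
    by (rule A[unfolded ACw_def, THEN spec[of _ n], THEN spec[of _ c], THEN spec[of _ d]])
  show "(\<Sum>i<n. \<bar>F (d i) - F (c i)\<bar>) < e"
    by (rule mp[OF A']) (use h h1 in blast)
qed

lemma ACw_diff:
  assumes A: "ACw F E (e/2) \<eta>1" and B: "ACw G E (e/2) \<eta>2"
  shows "ACw (\<lambda>x. F x - G x) E e (min \<eta>1 \<eta>2)"
  unfolding ACw_def
proof (intro allI impI)
  fix n :: nat and c d :: "nat \<Rightarrow> real"
  assume h: "(\<forall>i<n. c i \<in> E \<and> d i \<in> E \<and> c i \<le> d i) \<and>
        (\<forall>i<n. \<forall>j<n. i \<noteq> j \<longrightarrow> d i \<le> c j \<or> d j \<le> c i) \<and> (\<Sum>i<n. d i - c i) < min \<eta>1 \<eta>2"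
  have A': "(\<forall>i<n. c i \<in> E \<and> d i \<in> E \<and> c i \<le> d i) \<and>
        (\<forall>i<n. \<forall>j<n. i \<noteq> j \<longrightarrow> d i \<le> c j \<or> d j \<le> c i) \<and> (\<Sum>i<n. d i - c i) < \<eta>1
        \<longrightarrow> (\<Sum>i<n. \<bar>F (d i) - F (c i)\<bar>) < e/2"
    by (rule A[unfolded ACw_def, THEN spec[of _ n], THEN spec[of _ c], THEN spec[of _ d]])
  have B': "(\<forall>i<n. c i \<in> E \<and> d i \<in> E \<and> c i \<le> d i) \<and>
        (\<forall>i<n. \<forall>j<n. i \<noteq> j \<longrightarrow> d i \<le> c j \<or> d j \<le> c i) \<and> (\<Sum>i<n. d i - c i) < \<eta>2
        \<longrightarrow> (\<Sum>i<n. \<bar>G (d i) - G (c i)\<bar>) < e/2"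
    by (rule B[unfolded ACw_def, THEN spec[of _ n], THEN spec[of _ c], THEN spec[of _ d]])
  have s1: "(\<Sum>i<n. \<bar>F (d i) - F (c i)\<bar>) < e/2"
    by (rule mp[OF A']) (use h in auto)
  have s2: "(\<Sum>i<n. \<bar>G (d i) - G (c i)\<bar>) < e/2"
    by (rule mp[OF B']) (use h in auto)
  have "(\<Sum>i<n. \<bar>(F (d i) - G (d i)) - (F (c i) - G (c i))\<bar>)
        \<le> (\<Sum>i<n. \<bar>F (d i) - F (c i)\<bar> + \<bar>G (d i) - G (c i)\<bar>)"
    by (rule sum_mono) linarith
  also have "\<dots> = (\<Sum>i<n. \<bar>F (d i) - F (c i)\<bar>) + (\<Sum>i<n. \<bar>G (d i) - G (c i)\<bar>)"
    by (rule sum.distrib)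
  finally show "(\<Sum>i<n. \<bar>(F (d i) - G (d i)) - (F (c i) - G (c i))\<bar>) < e"
    using s1 s2 by linarith
qed

lemma AC_on_set_mono:
  assumes A: "AC_on_set F E" and sub: "E' \<subseteq> E" shows "AC_on_set F E'"
  unfolding AC_on_set_alt
proof (intro allI impI)
  fix e :: real assume e: "e > 0"
  obtain \<eta> where "\<eta> > 0" "ACw F E e \<eta>" using A e unfolding AC_on_set_alt by blast
  then show "\<exists>\<eta>>0. ACw F E' e \<eta>" using ACw_mono[OF _ sub] by blast
qed

lemma AC_on_set_diff:
  assumes "AC_on_set F E" "AC_on_set G E"
  shows "AC_on_set (\<lambda>x. F x - G x) E"
  unfolding AC_on_set_alt
proof (intro allI impI)
  fix e :: real assume e: "e > 0"
  then have e2: "e/2 > 0" by simp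
  obtain \<eta>1 where "\<eta>1 > 0" "ACw F E (e/2) \<eta>1"
    using assms(1) e2 unfolding AC_on_set_alt by blast
  moreover obtain \<eta>2 where "\<eta>2 > 0" "ACw G E (e/2) \<eta>2"
    using assms(2) e2 unfolding AC_on_set_alt by blast
  ultimately show "\<exists>\<eta>>0. ACw (\<lambda>x. F x - G x) E e \<eta>"
    by (intro exI[of _ "min \<eta>1 \<eta>2"] conjI ACw_diff) auto
qed

lemma H_const:
  fixes H :: "real \<Rightarrow> real" and E :: "nat \<Rightarrow> real set"
  assumes cd: "c \<le> d" and H: "continuous_on {c..d} H" and cov: "(\<Union>n. E n) = {c..d}"
    and AC: "\<And>n. AC_on_set H (E n)"
    and ae: "AE x in lebesgue. x \<in> {c..d} \<longrightarrow> approx_deriv H c d x 0"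
  shows "H d = H c"
proof (cases "c = d")
  case True then show ?thesis by simp
next
  case False
  then have cd': "c < d" using cd by simp
  from ae obtain N where N: "{x \<in> space lebesgue. \<not> (x \<in> {c..d} \<longrightarrow> approx_deriv H c d x 0)} \<subseteq> N"
    "emeasure lebesgue N = 0" "N \<in> sets lebesgue"
    by (rule AE_E)
  have "N \<in> null_sets lebesgue" using N(2,3) by (rule null_setsI)
  then have negN: "negligible N" by (simp add: negligible_iff_null_sets)
  define N' where "N' = N \<inter> {c..d}"
  have negN': "negligible N'" unfolding N'_def by (rule negligible_subset[OF negN]) blast
  define Z where "Z = {c..d} - N'"
  have Zsub: "Z \<subseteq> {c..d}" unfolding Z_def by blast
  have Zap: "approx_deriv H c d x 0" if x: "x \<in> Z" for x
  proof -
    have "x \<in> {c..d}" "x \<notin> N" using x unfolding Z_def N'_def by auto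
    then show ?thesis using N(1) by auto
  qed
  have negZ: "negligible (H ` Z)" by (rule ap0_image_null[OF cd' H Zsub Zap])
  have Esub: "E n \<subseteq> {c..d}" for n using cov by blast
  have negE: "negligible (H ` (N' \<inter> E n))" for n
    by (rule AC_image_null[OF cd' H Esub AC negN']) (simp add: N'_def)
  have "H ` {c..d} \<subseteq> (\<Union>n. H ` (N' \<inter> E n)) \<union> H ` Z"
  proof
    fix w assume "w \<in> H ` {c..d}"
    then obtain x where x: "x \<in> {c..d}" "w = H x" by blast
    show "w \<in> (\<Union>n. H ` (N' \<inter> E n)) \<union> H ` Z"
    proof (cases "x \<in> N'")
      case True
      obtain n where "x \<in> E n" using x(1) cov by blast
      then show ?thesis using True x(2) by blast
    next
      case False
      then show ?thesis using x unfolding Z_def by blast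
    qed
  qed
  moreover have "negligible ((\<Union>n. H ` (N' \<inter> E n)) \<union> H ` Z)"
    by (intro negligible_Un negligible_Union_nat negE negZ)
  ultimately have negI: "negligible (H ` {c..d})" by (rule negligible_subset[rotated])
  show ?thesis
  proof (rule ccontr)
    assume ne: "H d \<noteq> H c"
    have conn: "connected (H ` {c..d})"
      by (rule connected_continuous_image[OF H]) simp
    have "H c \<in> H ` {c..d}" "H d \<in> H ` {c..d}" using cd by auto
    then have "{min (H c) (H d)..max (H c) (H d)} \<subseteq> H ` {c..d}"
      using connected_contains_Icc[OF conn] by (simp add: min_def max_def)
    then have "negligible {min (H c) (H d)..max (H c) (H d)}"
      by (rule negligible_subset[OF negI])
    then have "negligible (cbox (min (H c) (H d)) (max (H c) (H d)))" by simp
    then have "box (min (H c) (H d)) (max (H c) (H d)) = {}" by (simp only: negligible_interval)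
    then show False using ne by (simp add: min_def max_def split: if_splits)
  qed
qed

lemma prim_restrict:
  assumes P: "denjoy_primitive F h a b" and ac: "a \<le> c" and db: "d \<le> b"
  shows "denjoy_primitive F h c d"
proof -
  have cont: "continuous_on {a..b} F" and ae: "AE x in lebesgue. x \<in> {a..b} \<longrightarrow> approx_deriv F a b x (h x)"
    using P unfolding denjoy_primitive_def ACG_on_def by blast+
  obtain E :: "nat \<Rightarrow> real set" where E: "(\<Union>n. E n) = {a..b}" "\<And>n. AC_on_set F (E n)"
    using P unfolding denjoy_primitive_def ACG_on_def by blast
  have "continuous_on {c..d} F" by (rule continuous_on_subset[OF cont]) (use ac db in auto)
  moreover have "(\<Union>n. E n \<inter> {c..d}) = {c..d}" using E(1) ac db by auto
  moreover have "\<forall>n. AC_on_set F (E n \<inter> {c..d})" using AC_on_set_mono[OF E(2)] by blast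
  moreover have "AE x in lebesgue. x \<in> {c..d} \<longrightarrow> approx_deriv F c d x (h x)"
    using ae
  proof eventually_elim
    case (elim x)
    show ?case
    proof
      assume "x \<in> {c..d}"
      then have "x \<in> {a..b}" using ac db by auto
      then have "approx_deriv F a b x (h x)" using elim by blast
      then show "approx_deriv F c d x (h x)" by (rule approx_deriv_restrict[OF cont ac db])
    qed
  qed
  ultimately show ?thesis unfolding denjoy_primitive_def ACG_on_def
    by (intro conjI exI[of _ "\<lambda>n. E n \<inter> {c..d}"]) assumption+
qed

lemma prim_unique:
  assumes P: "denjoy_primitive F h c d" and Q: "denjoy_primitive G h c d" and cd: "c \<le> d"
  shows "F d - F c = G d - G c"
proof -
  have contF: "continuous_on {c..d} F" and aeF: "AE x in lebesgue. x \<in> {c..d} \<longrightarrow> approx_deriv F c d x (h x)"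
    using P unfolding denjoy_primitive_def ACG_on_def by blast+
  obtain EF :: "nat \<Rightarrow> real set" where EF: "(\<Union>n. EF n) = {c..d}" "\<And>n. AC_on_set F (EF n)"
    using P unfolding denjoy_primitive_def ACG_on_def by blast
  have contG: "continuous_on {c..d} G" and aeG: "AE x in lebesgue. x \<in> {c..d} \<longrightarrow> approx_deriv G c d x (h x)"
    using Q unfolding denjoy_primitive_def ACG_on_def by blast+
  obtain EG :: "nat \<Rightarrow> real set" where EG: "(\<Union>n. EG n) = {c..d}" "\<And>n. AC_on_set G (EG n)"
    using Q unfolding denjoy_primitive_def ACG_on_def by blast
  define H where "H x = F x - G x" for x
  define E where "E n = EF (fst (prod_decode n)) \<inter> EG (snd (prod_decode n))" for n
  have contH: "continuous_on {c..d} H" unfolding H_def by (intro continuous_on_diff contF contG)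
  have covE: "(\<Union>n. E n) = {c..d}"
  proof
    show "(\<Union>n. E n) \<subseteq> {c..d}" unfolding E_def using EF(1) by blast
    show "{c..d} \<subseteq> (\<Union>n. E n)"
    proof
      fix x assume x: "x \<in> {c..d}"
      obtain i where i: "x \<in> EF i" using x EF(1) by blast
      obtain j where j: "x \<in> EG j" using x EG(1) by blast
      have "x \<in> E (prod_encode (i, j))" unfolding E_def using i j by simp
      then show "x \<in> (\<Union>n. E n)" by blast
    qed
  qed
  have ACE: "AC_on_set H (E n)" for n
  proof -
    have "AC_on_set F (E n)" by (rule AC_on_set_mono[OF EF(2)]) (auto simp: E_def)
    moreover have "AC_on_set G (E n)" by (rule AC_on_set_mono[OF EG(2)]) (auto simp: E_def)
    ultimately show ?thesis unfolding H_def by (rule AC_on_set_diff)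
  qed
  have aeH: "AE x in lebesgue. x \<in> {c..d} \<longrightarrow> approx_deriv H c d x 0"
    using aeF aeG
  proof eventually_elim
    case (elim x)
    show ?case
    proof
      assume x: "x \<in> {c..d}"
      have "approx_deriv F c d x (h x)" "approx_deriv G c d x (h x)" using elim x by blast+
      then show "approx_deriv H c d x 0" unfolding H_def by (rule approx_deriv_diff[OF contF contG])
    qed
  qed
  have "H d = H c" by (rule H_const[OF cd contH covE ACE aeH])
  then show ?thesis unfolding H_def by simp
qed

lemma integral_eq:
  assumes P: "denjoy_primitive F h c d" and cd: "c \<le> d"
  shows "denjoy_integral h c d = F d - F c"
proof -
  have ex: "\<exists>I. \<exists>F'. denjoy_primitive F' h c d \<and> I = F' d - F' c" using P by blast
  have "\<exists>F'. denjoy_primitive F' h c d \<and> denjoy_integral h c d = F' d - F' c"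
    unfolding denjoy_integral_def by (rule someI_ex[OF ex])
  then obtain F' where F': "denjoy_primitive F' h c d" "denjoy_integral h c d = F' d - F' c" by blast
  show ?thesis using F'(2) prim_unique[OF F'(1) P cd] by simp
qed

lemma uniform_bound:
  fixes T :: "nat \<Rightarrow> ('a::banach \<Rightarrow>\<^sub>L real)"
  assumes pb: "\<And>y. \<exists>B. \<forall>n. \<bar>T n y\<bar> \<le> B"
  shows "\<exists>M. \<forall>n. norm (T n) \<le> M"
proof -
  define C where "C m = {y. \<forall>n. \<bar>T n y\<bar> \<le> real m}" for m :: nat
  have contT: "continuous_on UNIV (\<lambda>y. \<bar>blinfun_apply (T n) y\<bar>)" for n
    by (intro continuous_intros linear_continuous_on blinfun.bounded_linear_right)
  have closedC: "closed (C m)" for m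
  proof -
    have "C m = (\<Inter>n. {y. \<bar>blinfun_apply (T n) y\<bar> \<le> real m})" unfolding C_def by blast
    moreover have "closed {y. \<bar>blinfun_apply (T n) y\<bar> \<le> real m}" for n
      by (rule closed_Collect_le[OF contT continuous_on_const])
    ultimately show ?thesis by auto
  qed
  have covC: "(\<Union>m. C m) = UNIV"
  proof -
    have "y \<in> (\<Union>m. C m)" for y
    proof -
      obtain B where B: "\<forall>n. \<bar>T n y\<bar> \<le> B" using pb by blast
      have Bc: "B \<le> real (nat \<lceil>B\<rceil>)" by linarith
      have "\<forall>n. \<bar>T n y\<bar> \<le> real (nat \<lceil>B\<rceil>)" using B Bc order_trans by blast
      then have "y \<in> C (nat \<lceil>B\<rceil>)" unfolding C_def by blast
      then show ?thesis by blast
    qed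
    then show ?thesis by blast
  qed
  have "\<exists>m. interior (C m) \<noteq> {}"
  proof (rule ccontr)
    assume "\<not> (\<exists>m. interior (C m) \<noteq> {})"
    then have emp: "\<And>m. interior (C m) = {}" by blast
    have "euclidean interior_of \<Union>(range C) = {}"
    proof (rule Baire_category_alt)
      show "completely_metrizable_space (euclidean :: 'a topology) \<or> locally_compact_space (euclidean :: 'a topology) \<and> regular_space euclidean"
        using completely_metrizable_space_euclidean by blast
      show "countable (range C)" by simp
      fix S assume "S \<in> range C"
      then obtain m where "S = C m" by blast
      then show "closedin euclidean S \<and> euclidean interior_of S = {}"
        using closedC emp by (simp add: closed_closedin[symmetric])
    qed
    then show False using covC by simp
  qed
  then obtain m where "interior (C m) \<noteq> {}" by blast
  then obtain y0 where "y0 \<in> interior (C m)" by blast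
  then obtain r where r: "r > 0" "ball y0 r \<subseteq> C m"
    using open_contains_ball[of "interior (C m)"] interior_subset[of "C m"] by blast
  have y0C: "y0 \<in> C m" using r by auto
  have small: "\<bar>T n z\<bar> \<le> 2 * real m" if z: "norm z < r" for n z
  proof -
    have "y0 + z \<in> ball y0 r" using z by (simp add: dist_norm)
    then have "y0 + z \<in> C m" using r by blast
    then have 1: "\<bar>T n (y0 + z)\<bar> \<le> real m" unfolding C_def by blast
    have 2: "\<bar>T n y0\<bar> \<le> real m" using y0C unfolding C_def by blast
    have "T n z = T n (y0 + z) - T n y0" by (simp add: blinfun.add_right)
    then show ?thesis using 1 2 by linarith
  qed
  have "norm (T n) \<le> 4 * real m / r" for n
  proof (rule norm_blinfun_bound)
    show "0 \<le> 4 * real m / r" using r by simp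
    fix y
    show "norm (T n y) \<le> 4 * real m / r * norm y"
    proof (cases "y = 0")
      case True then show ?thesis by simp
    next
      case False
      then have ny: "norm y > 0" by simp
      define z where "z = (r / (2 * norm y)) *\<^sub>R y"
      have nz: "norm z = r / 2" unfolding z_def using ny r by simp
      then have "norm z < r" using r by simp
      then have bz: "\<bar>T n z\<bar> \<le> 2 * real m" by (rule small)
      have Tz: "T n z = (r / (2 * norm y)) * T n y" unfolding z_def by (simp add: blinfun.scaleR_right)
      have "\<bar>T n y\<bar> = (2 * norm y / r) * \<bar>T n z\<bar>"
        unfolding Tz using ny r by (simp add: abs_mult field_simps)
      also have "\<dots> \<le> (2 * norm y / r) * (2 * real m)"
        by (rule mult_left_mono[OF bz]) (use r ny in simp)
      also have "\<dots> = 4 * real m / r * norm y" by (simp add: field_simps)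
      finally show ?thesis by simp
    qed
  qed
  then show ?thesis by blast
qed

lemma AC_on_set_shift:
  assumes A: "AC_on_set G E" and eq: "\<And>x. x \<in> E \<Longrightarrow> F x = G x + C"
  shows "AC_on_set F E"
  unfolding AC_on_set_alt
proof (intro allI impI)
  fix e :: real assume e: "e > 0"
  obtain \<eta> where \<eta>: "\<eta> > 0" "ACw G E e \<eta>" using A e unfolding AC_on_set_alt by blast
  have "ACw F E e \<eta>"
    unfolding ACw_def
  proof (intro allI impI)
    fix n :: nat and c d :: "nat \<Rightarrow> real"
    assume h: "(\<forall>i<n. c i \<in> E \<and> d i \<in> E \<and> c i \<le> d i) \<and>
        (\<forall>i<n. \<forall>j<n. i \<noteq> j \<longrightarrow> d i \<le> c j \<or> d j \<le> c i) \<and> (\<Sum>i<n. d i - c i) < \<eta>"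
    have G': "(\<Sum>i<n. \<bar>G (d i) - G (c i)\<bar>) < e"
      by (rule mp[OF \<eta>(2)[unfolded ACw_def, THEN spec[of _ n], THEN spec[of _ c], THEN spec[of _ d]] h])
    have "(\<Sum>i<n. \<bar>F (d i) - F (c i)\<bar>) = (\<Sum>i<n. \<bar>G (d i) - G (c i)\<bar>)"
    proof (rule sum.cong[OF refl])
      fix i assume "i \<in> {..<n}"
      then have "c i \<in> E" "d i \<in> E" using h by auto
      then show "\<bar>F (d i) - F (c i)\<bar> = \<bar>G (d i) - G (c i)\<bar>" using eq by simp
    qed
    then show "(\<Sum>i<n. \<bar>F (d i) - F (c i)\<bar>) < e" using G' by simp
  qed
  then show "\<exists>\<eta>>0. ACw F E e \<eta>" using \<eta>(1) by blast
qed

lemma AC_singleton: "AC_on_set F {b}"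
  unfolding AC_on_set_alt
proof (intro allI impI)
  fix e :: real assume e: "e > 0"
  have "ACw F {b} e 1"
    unfolding ACw_def
  proof (intro allI impI)
    fix n :: nat and c d :: "nat \<Rightarrow> real"
    assume h: "(\<forall>i<n. c i \<in> {b} \<and> d i \<in> {b} \<and> c i \<le> d i) \<and>
        (\<forall>i<n. \<forall>j<n. i \<noteq> j \<longrightarrow> d i \<le> c j \<or> d j \<le> c i) \<and> (\<Sum>i<n. d i - c i) < 1"
    have "(\<Sum>i<n. \<bar>F (d i) - F (c i)\<bar>) = (\<Sum>i<n. 0)"
    proof (rule sum.cong[OF refl])
      fix i assume "i \<in> {..<n}"
      then have "c i = b" "d i = b" using h by auto
      then show "\<bar>F (d i) - F (c i)\<bar> = 0" by simp
    qed
    then show "(\<Sum>i<n. \<bar>F (d i) - F (c i)\<bar>) < e" using e by simp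
  qed
  then show "\<exists>\<eta>>0. ACw F {b} e \<eta>" by (intro exI[of _ 1]) simp
qed

lemma approx_deriv_local:
  assumes ap: "approx_deriv G a t x L" and ax: "a \<le> x" and xt: "x < t" and tb: "t \<le> b"
    and eq: "\<And>y. y \<in> {a..t} \<Longrightarrow> F y = G y + C"
  shows "approx_deriv F a b x L"
  unfolding approx_deriv_badset
proof (intro allI impI)
  fix e :: real assume e: "e > 0"
  have lim: "((\<lambda>r. measure lebesgue (badset G a t x L e r) / r) \<longlongrightarrow> 0) (at_right 0)"
    using ap e unfolding approx_deriv_badset by blast
  have xat: "x \<in> {a..t}" using ax xt by simp
  have seteq: "badset G a t x L e r = badset F a b x L e r" if r: "0 < r" "r < t - x" for r
  proof (rule set_eqI)
    fix y
    show "y \<in> badset G a t x L e r \<longleftrightarrow> y \<in> badset F a b x L e r"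
    proof
      assume y: "y \<in> badset G a t x L e r"
      then have y1: "y \<in> {a..t}" "y \<noteq> x" "\<bar>y - x\<bar> \<le> r" "e \<le> \<bar>(G y - G x) / (y - x) - L\<bar>"
        unfolding badset_def by blast+
      have "F y - F x = G y - G x" using eq[OF y1(1)] eq[OF xat] by simp
      then show "y \<in> badset F a b x L e r" unfolding badset_def using y1 tb by auto
    next
      assume y: "y \<in> badset F a b x L e r"
      then have y1: "y \<in> {a..b}" "y \<noteq> x" "\<bar>y - x\<bar> \<le> r" "e \<le> \<bar>(F y - F x) / (y - x) - L\<bar>"
        unfolding badset_def by blast+
      have yt: "y \<in> {a..t}" using y1 r by auto
      have "F y - F x = G y - G x" using eq[OF yt] eq[OF xat] by simp
      then show "y \<in> badset G a t x L e r" unfolding badset_def using y1 yt by auto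
    qed
  qed
  have ev: "eventually (\<lambda>r. measure lebesgue (badset G a t x L e r) / r = measure lebesgue (badset F a b x L e r) / r) (at_right 0)"
    by (rule eventually_at_rightI[of 0 "t - x"]) (use seteq xt in auto)
  show "((\<lambda>r. measure lebesgue (badset F a b x L e r) / r) \<longlongrightarrow> 0) (at_right 0)"
    by (rule Lim_transform_eventually[OF lim ev])
qed

lemma tk_facts:
  fixes a b :: real assumes ab: "a < b"
  shows "a \<le> b - (b - a) / (real k + 2)" "b - (b - a) / (real k + 2) < b"
proof -
  have "(b - a) / (real k + 2) \<le> (b - a) / 1"
    using ab by (intro divide_left_mono) auto
  then show "a \<le> b - (b - a) / (real k + 2)" by simp
  show "b - (b - a) / (real k + 2) < b" using ab by simp
qed

lemma tk_exceeds:
  fixes a b x :: real assumes ab: "a < b" and xb: "x < b"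
  shows "\<exists>k. x < b - (b - a) / (real k + 2)"
proof -
  have pos: "(b - x) / (b - a) > 0" using ab xb by simp
  obtain k :: nat where k: "1 / real (Suc k) < (b - x) / (b - a)" using nat_approx_posE[OF pos] by blast
  have "(b - a) / (real k + 2) \<le> (b - a) / real (Suc k)"
    using ab by (intro divide_left_mono) auto
  also have "\<dots> = (b - a) * (1 / real (Suc k))" by simp
  also have "\<dots> < (b - a) * ((b - x) / (b - a))" using k ab by (intro mult_strict_left_mono) auto
  also have "\<dots> = b - x" using ab by simp
  finally show ?thesis by (intro exI[of _ k]) linarith
qed

lemma hake_scalar:
  fixes h :: "real \<Rightarrow> real"
  assumes ab: "a < b" and int: "\<And>t. t \<in> {a..<b} \<Longrightarrow> denjoy_integrable h a t"
    and lim: "((\<lambda>t. denjoy_integral h a t) \<longlongrightarrow> L) (at_left b)"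
  shows "denjoy_primitive (\<lambda>t. if t < b then denjoy_integral h a t else L) h a b"
proof -
  define F where "F = (\<lambda>t. if t < b then denjoy_integral h a t else L)"
  define tk where "tk k = b - (b - a) / (real k + 2)" for k :: nat
  have tk1: "a \<le> tk k" and tk2: "tk k < b" for k unfolding tk_def using tk_facts[OF ab] by auto
  have tkex: "\<exists>k. x < tk k" if "x < b" for x unfolding tk_def using tk_exceeds[OF ab that] .
  have "\<forall>k. \<exists>P. denjoy_primitive P h a (tk k)"
  proof
    fix k
    have "tk k \<in> {a..<b}" using tk1 tk2 by simp
    then show "\<exists>P. denjoy_primitive P h a (tk k)" using int unfolding denjoy_integrable_def by blast
  qed
  from choice[OF this] obtain P where P: "\<forall>k. denjoy_primitive (P k) h a (tk k)" by (rule exE)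
  have Pk: "denjoy_primitive (P k) h a (tk k)" for k using P by blast
  have Feq: "F s = P k s + (- P k a)" if s: "s \<in> {a..tk k}" for s k
  proof -
    have sb: "s < b" using s tk2[of k] by simp
    have "denjoy_integral h a s = P k s - P k a"
      by (rule integral_eq[OF prim_restrict[OF Pk order_refl]]) (use s in auto)
    then show ?thesis unfolding F_def using sb by simp
  qed
  have Pcont: "continuous_on {a..tk k} (P k)" for k
    using Pk unfolding denjoy_primitive_def ACG_on_def by blast
  have "\<forall>k. \<exists>E :: nat \<Rightarrow> real set. (\<Union>n. E n) = {a..tk k} \<and> (\<forall>n. AC_on_set (P k) (E n))"
    using P unfolding denjoy_primitive_def ACG_on_def by blast
  from choice[OF this] obtain ES :: "nat \<Rightarrow> nat \<Rightarrow> real set" where ES: "\<forall>k. (\<Union>n. ES k n) = {a..tk k} \<and> (\<forall>n. AC_on_set (P k) (ES k n))"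
    by (rule exE)
  have ES1: "(\<Union>n. ES k n) = {a..tk k}" and ES2: "AC_on_set (P k) (ES k n)" for k n using ES by blast+
  have PAE: "AE x in lebesgue. x \<in> {a..tk k} \<longrightarrow> approx_deriv (P k) a (tk k) x (h x)" for k
    using Pk unfolding denjoy_primitive_def by blast
  have cont: "continuous_on {a..b} F"
    unfolding continuous_on_eq_continuous_within
  proof
    fix x assume x: "x \<in> {a..b}"
    show "continuous (at x within {a..b}) F"
    proof (cases "x < b")
      case True
      obtain k where k: "x < tk k" using tkex[OF True] by blast
      have "continuous_on {a..tk k} (\<lambda>s. P k s + (- P k a))"
        by (intro continuous_intros Pcont)
      moreover have "continuous_on {a..tk k} F \<longleftrightarrow> continuous_on {a..tk k} (\<lambda>s. P k s + (- P k a))"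
        by (rule continuous_on_cong[OF refl]) (rule Feq)
      ultimately have "continuous_on {a..tk k} F" by simp
      moreover have xk: "x \<in> {a..tk k}" using x k by simp
      ultimately have c1: "continuous (at x within {a..tk k}) F"
        unfolding continuous_on_eq_continuous_within by (rule bspec)
      have "at x within {a..b} = at x within {a..tk k}"
        by (rule at_within_nhd[of x "{..<tk k}"]) (use k tk2[of k] in auto)
      then show ?thesis using c1 by simp
    next
      case False
      then have xb: "x = b" using x by simp
      have ev: "eventually (\<lambda>t. denjoy_integral h a t = F t) (at_left b)"
        unfolding eventually_at_left_field F_def using ab by (intro exI[of _ a] conjI allI impI) simp_all
      have "(F \<longlongrightarrow> L) (at_left b)" by (rule Lim_transform_eventually[OF lim ev])
      moreover have "F b = L" unfolding F_def by simp
      ultimately show ?thesis unfolding xb continuous_within at_within_Icc_at_left[OF ab] by simp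
    qed
  qed
  define E where "E m = (if m = 0 then {b} else ES (fst (prod_decode (m - 1))) (snd (prod_decode (m - 1))))" for m
  have covE: "(\<Union>m. E m) = {a..b}"
  proof
    show "(\<Union>m. E m) \<subseteq> {a..b}"
    proof
      fix x assume "x \<in> (\<Union>m. E m)"
      then obtain m where m: "x \<in> E m" by blast
      show "x \<in> {a..b}"
      proof (cases "m = 0")
        case True then show ?thesis using m ab unfolding E_def by simp
      next
        case False
        let ?k = "fst (prod_decode (m - 1))"
        have "x \<in> ES ?k (snd (prod_decode (m - 1)))" using m False unfolding E_def by simp
        then have "x \<in> {a..tk ?k}" using ES1[of ?k] by blast
        then show ?thesis using tk2[of ?k] by simp
      qed
    qed
    show "{a..b} \<subseteq> (\<Union>m. E m)"
    proof
      fix x assume x: "x \<in> {a..b}"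
      show "x \<in> (\<Union>m. E m)"
      proof (cases "x < b")
        case True
        obtain k where k: "x < tk k" using tkex[OF True] by blast
        then have "x \<in> (\<Union>n. ES k n)" using ES1[of k] x by simp
        then obtain n where n: "x \<in> ES k n" by blast
        have "E (Suc (prod_encode (k, n))) = ES k n" unfolding E_def by simp
        then show ?thesis using n by blast
      next
        case False
        then have "x \<in> E 0" using x unfolding E_def by simp
        then show ?thesis by blast
      qed
    qed
  qed
  have ACE: "AC_on_set F (E m)" for m
  proof (cases "m = 0")
    case True then show ?thesis unfolding E_def by (simp add: AC_singleton)
  next
    case False
    let ?k = "fst (prod_decode (m - 1))"
    let ?n = "snd (prod_decode (m - 1))"
    have Em: "E m = ES ?k ?n" using False unfolding E_def by simp
    have "AC_on_set F (ES ?k ?n)"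
    proof (rule AC_on_set_shift[OF ES2])
      fix x assume "x \<in> ES ?k ?n"
      then have "x \<in> {a..tk ?k}" using ES1[of ?k] by blast
      then show "F x = P ?k x + (- P ?k a)" by (rule Feq)
    qed
    then show ?thesis using Em by simp
  qed
  have ae1: "AE x in lebesgue. \<forall>k. x \<in> {a..tk k} \<longrightarrow> approx_deriv (P k) a (tk k) x (h x)"
    using PAE by (simp add: AE_all_countable)
  have "{b} \<in> null_sets lebesgue" using negligible_sing[of b] by (simp add: negligible_iff_null_sets)
  then have ae2: "AE x in lebesgue. x \<notin> {b}" by (rule AE_not_in)
  have aeF: "AE x in lebesgue. x \<in> {a..b} \<longrightarrow> approx_deriv F a b x (h x)"
    using ae1 ae2
  proof eventually_elim
    case (elim x)
    show ?case
    proof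
      assume x: "x \<in> {a..b}"
      then have xb: "x < b" using elim(2) by auto
      obtain k where k: "x < tk k" using tkex[OF xb] by blast
      have "approx_deriv (P k) a (tk k) x (h x)" using elim(1) x k by auto
      then show "approx_deriv F a b x (h x)"
        by (rule approx_deriv_local[where C = "- P k a"]) (use x k tk2[of k] Feq in auto)
    qed
  qed
  have "denjoy_primitive F h a b"
    unfolding denjoy_primitive_def ACG_on_def
    by (intro conjI exI[of _ E] allI cont covE ACE aeF)
  then show ?thesis unfolding F_def .
qed

lemma DG_integral_eq:
  fixes g :: "real \<Rightarrow> ('a::banach \<Rightarrow>\<^sub>L real)"
  assumes "\<exists>ys :: 'a \<Rightarrow>\<^sub>L real. \<forall>y. blinfun_apply ys y = denjoy_integral (\<lambda>t. g t y) c d"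
  shows "blinfun_apply (DG_integral g c d) y = denjoy_integral (\<lambda>t. g t y) c d"
proof -
  obtain ys :: "'a \<Rightarrow>\<^sub>L real" where ys: "\<forall>y. blinfun_apply ys y = denjoy_integral (\<lambda>t. g t y) c d"
    using assms by blast
  have uniq: "\<exists>!ys :: 'a \<Rightarrow>\<^sub>L real. \<forall>y. blinfun_apply ys y = denjoy_integral (\<lambda>t. g t y) c d"
  proof (rule ex1I[of _ ys])
    show "\<forall>y. blinfun_apply ys y = denjoy_integral (\<lambda>t. g t y) c d" by (rule ys)
    fix zs :: "'a \<Rightarrow>\<^sub>L real" assume "\<forall>y. blinfun_apply zs y = denjoy_integral (\<lambda>t. g t y) c d"
    then show "zs = ys" using ys by (intro blinfun_eqI) simp
  qed
  have "\<forall>y. blinfun_apply (DG_integral g c d) y = denjoy_integral (\<lambda>t. g t y) c d"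
    unfolding DG_integral_def by (rule theI'[OF uniq])
  then show ?thesis by blast
qed

theorem proposition2p1:
  fixes g :: "real \<Rightarrow> ('a::banach \<Rightarrow>\<^sub>L real)" and a b :: real
  assumes "a < b"
    and "\<forall>t \<in> {a..<b}. DG_integrable g a t"
    and "\<forall>y. \<exists>L. ((\<lambda>t. denjoy_integral (\<lambda>s. g s y) a t) \<longlongrightarrow> L) (at_left b)"
  shows "DG_integrable g a b \<and>
         (\<forall>y. ((\<lambda>t. DG_integral g a t y) \<longlongrightarrow> DG_integral g a b y) (at_left b))"
proof -
  note ab = assms(1)
  have DGt: "DG_integrable g a t" if "t \<in> {a..<b}" for t using assms(2) that by blast
  have intg: "denjoy_integrable (\<lambda>s. g s y) a t" if "t \<in> {a..<b}" for y t
    using DGt[OF that] unfolding DG_integrable_def by blast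
  define L where "L y = Lim (at_left b) (\<lambda>t. denjoy_integral (\<lambda>s. g s y) a t)" for y
  have limL: "((\<lambda>t. denjoy_integral (\<lambda>s. g s y) a t) \<longlongrightarrow> L y) (at_left b)" for y
  proof -
    obtain L' where L': "((\<lambda>t. denjoy_integral (\<lambda>s. g s y) a t) \<longlongrightarrow> L') (at_left b)"
      using assms(3) by blast
    have "L y = L'" unfolding L_def by (rule tendsto_Lim[OF trivial_limit_at_left_real L'])
    then show ?thesis using L' by simp
  qed
  define FF where "FF y = (\<lambda>t. if t < b then denjoy_integral (\<lambda>s. g s y) a t else L y)" for y
  have prim: "denjoy_primitive (FF y) (\<lambda>s. g s y) a b" for y
    unfolding FF_def by (rule hake_scalar[OF ab intg limL])
  have intab: "denjoy_integral (\<lambda>s. g s y) c d = FF y d - FF y c"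
    if "a \<le> c" "c \<le> d" "d \<le> b" for y c d
    by (rule integral_eq[OF prim_restrict[OF prim that(1) that(3)] that(2)])
  have Iaa: "denjoy_integral (\<lambda>s. g s y) a a = 0" for y
    using intab[of a a y] ab by simp
  have Phi: "blinfun_apply (DG_integral g a t) y = denjoy_integral (\<lambda>s. g s y) a t"
    if t: "t \<in> {a..<b}" for t y
  proof (rule DG_integral_eq)
    show "\<exists>ys :: 'a \<Rightarrow>\<^sub>L real. \<forall>y. blinfun_apply ys y = denjoy_integral (\<lambda>s. g s y) a t"
      using DGt[OF t] t unfolding DG_integrable_def by auto
  qed
  define tk where "tk k = b - (b - a) / (real k + 2)" for k :: nat
  have tk1: "a \<le> tk k" and tk2: "tk k < b" for k unfolding tk_def using tk_facts[OF ab] by auto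
  have tklim: "filterlim tk (at_left b) sequentially"
  proof -
    have "(\<lambda>k. (b - a) / (real k + 2)) \<longlonglongrightarrow> 0"
    proof (rule tendsto_divide_0[OF tendsto_const])
      have "filterlim (\<lambda>k. 2 + real k) at_top sequentially"
        by (rule filterlim_tendsto_add_at_top[OF tendsto_const filterlim_real_sequentially])
      then have "filterlim (\<lambda>k. real k + 2) at_top sequentially" by (simp add: add.commute)
      then show "filterlim (\<lambda>k. real k + 2) at_infinity sequentially"
        by (rule filterlim_at_top_imp_at_infinity)
    qed
    then have "(\<lambda>k. b - (b - a) / (real k + 2)) \<longlonglongrightarrow> b - 0" by (intro tendsto_diff tendsto_const)
    then have "tk \<longlonglongrightarrow> b" unfolding tk_def by simp
    moreover have "eventually (\<lambda>k. tk k \<in> {..<b} \<and> tk k \<noteq> b) sequentially"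
    proof (rule always_eventually, rule allI)
      fix k show "tk k \<in> {..<b} \<and> tk k \<noteq> b" using tk2[of k] by simp
    qed
    ultimately show ?thesis by (simp add: filterlim_at)
  qed
  define T where "T k = DG_integral g a (tk k)" for k
  have Tk: "blinfun_apply (T k) y = denjoy_integral (\<lambda>s. g s y) a (tk k)" for k y
    unfolding T_def by (rule Phi) (use tk1 tk2 in simp)
  have Tlim: "(\<lambda>k. blinfun_apply (T k) y) \<longlonglongrightarrow> L y" for y
    unfolding Tk by (rule filterlim_compose[OF limL tklim])
  have "\<exists>B. \<forall>n. \<bar>blinfun_apply (T n) y\<bar> \<le> B" for y
  proof -
    have "Bseq (\<lambda>k. blinfun_apply (T k) y)" by (rule convergent_imp_Bseq) (use Tlim in \<open>auto simp: convergent_def\<close>)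
    then obtain B where "\<forall>n. norm (blinfun_apply (T n) y) \<le> B" by (auto simp: Bseq_def)
    then show ?thesis by auto
  qed
  then obtain M where M: "\<And>n. norm (T n) \<le> M" using uniform_bound[of T] by blast
  have Ladd: "L (y + z) = L y + L z" for y z
  proof -
    have "(\<lambda>k. blinfun_apply (T k) (y + z)) \<longlonglongrightarrow> L y + L z"
      unfolding blinfun.add_right by (intro tendsto_add Tlim)
    then show ?thesis using Tlim[of "y + z"] by (rule LIMSEQ_unique[rotated])
  qed
  have Lscale: "L (r *\<^sub>R y) = r *\<^sub>R L y" for r y
  proof -
    have "(\<lambda>k. blinfun_apply (T k) (r *\<^sub>R y)) \<longlonglongrightarrow> r *\<^sub>R L y"
      unfolding blinfun.scaleR_right by (intro tendsto_scaleR tendsto_const Tlim)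
    then show ?thesis using Tlim[of "r *\<^sub>R y"] by (rule LIMSEQ_unique[rotated])
  qed
  have Lbound: "norm (L y) \<le> norm y * M" for y
  proof -
    have "(\<lambda>k. norm (blinfun_apply (T k) y)) \<longlonglongrightarrow> norm (L y)" by (intro tendsto_norm Tlim)
    moreover have "\<forall>n\<ge>0. norm (blinfun_apply (T n) y) \<le> norm y * M"
    proof (intro allI impI)
      fix n :: nat
      have "norm (blinfun_apply (T n) y) \<le> norm (T n) * norm y" by (rule norm_blinfun)
      also have "\<dots> \<le> M * norm y" by (intro mult_right_mono M) simp
      finally show "norm (blinfun_apply (T n) y) \<le> norm y * M" by (simp add: mult.commute)
    qed
    ultimately show ?thesis by (intro LIMSEQ_le_const2) blast+
  qed
  have blL: "bounded_linear L" by (rule bounded_linear_intro[OF Ladd Lscale Lbound])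
  define Lam where "Lam = Blinfun L"
  have Lam: "blinfun_apply Lam y = L y" for y unfolding Lam_def using bounded_linear_Blinfun_apply[OF blL] by simp
  have sub: "\<exists>ys :: 'a \<Rightarrow>\<^sub>L real. \<forall>y. blinfun_apply ys y = denjoy_integral (\<lambda>t. g t y) c d"
    if cd: "a \<le> c" "c \<le> d" "d \<le> b" for c d
  proof (cases "d < b")
    case True
    then have "d \<in> {a..<b}" using cd by simp
    then show ?thesis using DGt cd unfolding DG_integrable_def by blast
  next
    case False
    then have db: "d = b" using cd by simp
    show ?thesis
    proof (cases "c < b")
      case True
      have ca: "c \<in> {a..<b}" using True cd by simp
      have "blinfun_apply (Lam - DG_integral g a c) y = denjoy_integral (\<lambda>t. g t y) c d" for y
      proof -
        have "denjoy_integral (\<lambda>t. g t y) c d = FF y b - FF y c" using intab[OF cd] db by simp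
        also have "\<dots> = L y - denjoy_integral (\<lambda>s. g s y) a c" unfolding FF_def using True by simp
        finally show ?thesis using Lam Phi[OF ca] by (simp add: blinfun.diff_left)
      qed
      then show ?thesis by blast
    next
      case False
      then have cb: "c = b" using cd db by simp
      have "blinfun_apply 0 y = denjoy_integral (\<lambda>t. g t y) c d" for y
        using intab[OF cd, of y] cb db by simp
      then show ?thesis by blast
    qed
  qed
  have DGab: "DG_integrable g a b"
    unfolding DG_integrable_def
  proof (intro conjI allI impI)
    fix y show "denjoy_integrable (\<lambda>t. g t y) a b"
      unfolding denjoy_integrable_def using prim by blast
  next
    fix c d assume "a \<le> c \<and> c \<le> d \<and> d \<le> b"
    then show "\<exists>ys :: 'a \<Rightarrow>\<^sub>L real. \<forall>y. blinfun_apply ys y = denjoy_integral (\<lambda>t. g t y) c d"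
      using sub by blast
  qed
  have lim2: "((\<lambda>t. DG_integral g a t y) \<longlongrightarrow> DG_integral g a b y) (at_left b)" for y
  proof -
    have "DG_integral g a b y = denjoy_integral (\<lambda>t. g t y) a b"
      by (rule DG_integral_eq[OF sub]) (use ab in auto)
    also have "\<dots> = FF y b - FF y a" using intab[of a b y] ab by simp
    also have "\<dots> = L y" unfolding FF_def using ab Iaa by simp
    finally have eqb: "DG_integral g a b y = L y" .
    have ev: "eventually (\<lambda>t. denjoy_integral (\<lambda>s. g s y) a t = DG_integral g a t y) (at_left b)"
      unfolding eventually_at_left_field using ab by (intro exI[of _ a]) (auto simp: Phi)
    show ?thesis unfolding eqb by (rule Lim_transform_eventually[OF limL ev])
  qed
  show ?thesis using DGab lim2 by blast
qed

end
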